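(* Let $\mathfrak L=\mathbb V\oplus\mathbb W$ be a color gLt-algebra admitting a quasi-multiplicative basis $\mathfrak B=\{e_i\}_{i\in I}$ of $\mathbb W\neq 0$. If $[i]\neq[h]$ for some $i,h\in I$, then $\langle\mathfrak J_{[i]},\mathfrak J_{[h]},\mathfrak L,\dots,\mathfrak L\rangle_\sigma=0$ for every $\sigma\in\mathbb S_n$.
   Context: Let $\mathbb F$ be a field, $\mathbb G$ an abelian group, $n\ge 2$, and $\epsilon:\mathbb G\times\mathbb G\to\mathbb F\setminus\{0\}$ a bicharacter ($\epsilon(k,g+h)=\epsilon(k,g)\epsilon(k,h)$, $\epsilon(g+h,k)=\epsilon(g,k)\epsilon(h,k)$, $\epsilon(g,h)\epsilon(h,g)=1$). A graded $n$-ary algebra is a $\mathbb G$-graded vector space $\mathfrak L=\bigoplus_{g\in\mathbb G}\mathfrak L_g$ with an $n$-linear map $\langle\cdot,\dots,\cdot\rangle:\mathfrak L^n\to\mathfrak L$ such that $\langle\mathfrak L_{g_1},\dots,\mathfrak L_{g_n}\rangle\subset\mathfrak L_{g_1+\dots+g_n}$. For $\sigma\in\mathbb S_n$ write $\langle x_1,\dots,x_n\rangle_\sigma:=\langle x_{\sigma(1)},\dots,x_{\sigma(n)}\rangle$; for subsets $A_1,\dots,A_n$, $\langle A_1,\dots,A_n\rangle_\sigma$ denotes the linear span of all $\langle x_1,\dots,x_n\rangle_\sigma$ with $x_r\in A_r$. A color gLt-algebra is a graded $n$-ary algebra satisfying, for each $k=1,\dots,n$ and fixed scalars $\alpha^{\sigma_1,\sigma_2}_{i,j,k}\in\mathbb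 F$, the color version (each term on the right multiplied by the product of values of $\epsilon$ on the degrees of the homogeneous arguments transposed in passing from the left-hand order to the order of that term) of the identity $\langle y_1,\dots,y_{k-1},\langle x_1,\dots,x_n\rangle,y_k,\dots,y_{n-1}\rangle=\sum_{1\le i,j\le n,\,\sigma_1\in\mathbb S_n,\,\sigma_2\in\mathbb S_{n-1}}\alpha^{\sigma_1,\sigma_2}_{i,j,k}\langle x_{\sigma_1(1)},\dots,x_{\sigma_1(i-1)},\langle y_{\sigma_2(1)},\dots,y_{\sigma_2(j-1)},x_{\sigma_1(i)},y_{\sigma_2(j)},\dots,y_{\sigma_2(n-1)}\rangle,x_{\sigma_1(i+1)},\dots,x_{\sigma_1(n)}\rangle$. $\mathfrak L$ admits a quasi-multiplicative basis if $\mathfrak L=\mathbb V\oplus\mathbb W$ with $\mathbb V$, $\mathbb W\ne0$ graded subspaces and $\mathfrak B=\{e_i\}_{i\in I}$ a basis of homogeneous elements of $\mathbb W$ such that: (1) for $i_1,\dots,i_n\in I$, either $\langle e_{i_1},\dots,e_{i_n}\rangle\in\mathbb Fe_j$ for some $j\in I$ or $\langle e_{i_1},\dots,e_{i_n}\rangle\in\mathbb V$; (2) for $0<k<n$, $i_1,\dots,i_k\in I$ and $\sigma\in\mathbb S_n$, $\langle e_{i_1},\dots,e_{i_k},\mathbb V,\dots,\mathbb V\rangle_\sigma\subset\mathbb Fe_{j_\sigma}$ for some $j_\sigma\in I$; (3) either $\langle\mathbb V,\dots,\mathbb V\rangle\subset\mathbb Fe_j$ for some $j\in I$ or $\langle\mathbb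 V,\dots,\mathbb V\rangle\subset\mathbb V$. Index maps: let $v$ be a symbol not in $I$, $\mathfrak I:=I\,\dot\cup\,\{v\}$; for each $j\in\mathfrak I$ take a new symbol $\overline j$, $\overline I:=\{\overline i:i\in I\}$, $\overline{\mathfrak I}:=\overline I\,\dot\cup\,\{\overline v\}$; set $\overline{(\overline j)}:=j$, $\overline J:=\{\overline j:j\in J\}$ for a set $J$ of symbols ($\overline\emptyset=\emptyset$). Put $u_j:=e_j$ for $j\in I$ and $u_v:=\mathbb V$. For $\sigma\in\mathbb S_n$ and $(j_1,\dots,j_n)\in\mathfrak I^n$ let $a_\sigma(j_1,\dots,j_n)=\{r\}$ if $r\in I$ and $0\ne\langle u_{j_1},\dots,u_{j_n}\rangle_\sigma\subset\mathbb Fe_r$, $=\{v\}$ if $0\ne\langle u_{j_1},\dots,u_{j_n}\rangle_\sigma\subset\mathbb V$, and $=\emptyset$ otherwise. For $j,j_2,\dots,j_n\in\mathfrak I$ let $b_\sigma(j,\overline j_2,\dots,\overline j_n):=\{x\in\mathfrak I: a_\sigma(x,j_2,\dots,j_n)=\{j\}\}$. Define $\mu$ on $(\mathfrak I\,\dot\cup\,\overline{\mathfrak I})\times(\mathfrak I^{n-1}\,\dot\cup\,\overline{\mathfrak I}^{n-1})$ with values subsets of $\mathfrak I$ by: $\mu(j,j_1,\dots,j_{n-1})=\bigcup_{\sigma\in\mathbb S_n}a_\sigma(j,j_1,\dots,j_{n-1})$ for $j,j_1,\dots,j_{n-1}\in\mathfrak I$; $\mu(j,\overline j_1,\dots,\overline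 j_{n-1})=\bigcup_{\sigma\in\mathbb S_n}b_\sigma(j,\overline j_1,\dots,\overline j_{n-1})$ for $j,j_1,\dots,j_{n-1}\in\mathfrak I$; $\mu(\overline j,j_1,\dots,j_{n-1})=\bigcup_{1\le k\le n-1,\ \sigma\in\mathbb S_n}b_\sigma(j_k,\overline j,\overline j_1,\dots,\overline j_{k-1},\overline j_{k+1},\dots,\overline j_{n-1})$ for $j,j_1,\dots,j_{n-1}\in\mathfrak I$; and $\mu(\overline j,\overline j_1,\dots,\overline j_{n-1})=\emptyset$. Define $\phi$ on pairs $(J,X)$ with $J\subset I\,\dot\cup\,\overline I$ and $X\in\mathfrak I^{n-1}\,\dot\cup\,\overline{\mathfrak I}^{n-1}$ by $\phi(\emptyset,X)=\emptyset$ and, for $J\ne\emptyset$, $\phi(J,X):=K\cup\overline K$ where $K:=\big(\bigcup_{j\in J}\mu(j,X)\big)\setminus\{v\}$. Connections: for distinct $i,j\in I$, $i$ is connected to $j$ if there exist $t\ge1$, $X_1,\dots,X_t\in\mathfrak I^{n-1}\,\dot\cup\,\overline{\mathfrak I}^{n-1}$ and $\widetilde i\in\{i,\overline i\}$ such that $\phi(\{\widetilde i\},X_1)\ne\emptyset$, …, $\phi(\cdots\phi(\{\widetilde i\},X_1)\cdots,X_{t-1})\ne\emptyset$, and $j\in\phi(\cdots\phi(\phi(\{\widetilde i\},X_1),X_2)\cdots,X_t)$; every $i$ is connected to itself. Being connected is an equivalence relation $\sim$ on $I$; $[i]$ denotes the class of $i$. Define $\mathbb V_{[i]}:=\big(\sum_{i_1,\dots,i_n\in[i]}\mathbb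 F\langle e_{i_1},\dots,e_{i_n}\rangle\big)\cap\mathbb V$, $\mathbb W_{[i]}:=\bigoplus_{j\in[i]}\mathbb Fe_j$, and $\mathfrak J_{[i]}:=\mathbb V_{[i]}\oplus\mathbb W_{[i]}$. *)

theory Defs
  imports Main "HOL.Vector_Spaces" "HOL-Combinatorics.Permutations"
begin

text \<open>All indices are 0-based:
argument positions 1..n of the paper become 0..n-1, and a permutation of
S_n is a function permuting {0..<n}.\<close>

definition bicharacter :: "('g::ab_group_add \<Rightarrow> 'g \<Rightarrow> 'k::field) \<Rightarrow> bool" where
  "bicharacter eps \<longleftrightarrow>
     (\<forall>g h. eps g h \<noteq> 0) \<and>
     (\<forall>k g h. eps k (g + h) = eps k g * eps k h) \<and>
     (\<forall>k g h. eps (g + h) k = eps g k * eps h k) \<and>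
     (\<forall>g h. eps g h * eps h g = 1)"

definition graded_space :: "('k::field \<Rightarrow> 'v::ab_group_add \<Rightarrow> 'v) \<Rightarrow> ('g::ab_group_add \<Rightarrow> 'v set) \<Rightarrow> bool" where
  "graded_space scl Lg \<longleftrightarrow>
     vector_space scl \<and>
     (\<forall>g. module.subspace scl (Lg g)) \<and>
     (\<forall>v. \<exists>!c. finite {g. c g \<noteq> 0} \<and> (\<forall>g. c g \<in> Lg g) \<and> v = (\<Sum>g\<in>{g. c g \<noteq> 0}. c g))"

definition homogeneous :: "('g \<Rightarrow> 'v set) \<Rightarrow> 'v \<Rightarrow> bool" where
  "homogeneous Lg x \<longleftrightarrow> (\<exists>g. x \<in> Lg g)"

definition graded_subspace :: "('k::field \<Rightarrow> 'v::ab_group_add \<Rightarrow> 'v) \<Rightarrow> ('g \<Rightarrow> 'v set) \<Rightarrow> 'v set \<Rightarrow> bool" where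
  "graded_subspace scl Lg U \<longleftrightarrow>
     module.subspace scl U \<and> U = module.span scl (\<Union>g. U \<inter> Lg g)"

definition graded_nary_algebra ::
  "('k::field \<Rightarrow> 'v::ab_group_add \<Rightarrow> 'v) \<Rightarrow> ('g::ab_group_add \<Rightarrow> 'v set) \<Rightarrow> nat \<Rightarrow> ('v list \<Rightarrow> 'v) \<Rightarrow> bool" where
  "graded_nary_algebra scl Lg n P \<longleftrightarrow>
     graded_space scl Lg \<and>
     (\<forall>xs r. length xs = n \<and> r < n \<longrightarrow> Vector_Spaces.linear scl scl (\<lambda>x. P (xs[r := x]))) \<and>
     (\<forall>xs gs. length xs = n \<and> length gs = n \<and> (\<forall>r<n. xs ! r \<in> Lg (gs ! r))
         \<longrightarrow> P xs \<in> Lg (sum_list gs))"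

text \<open>Arguments of the identity are tagged: TX r is x_(r+1), TY r is y_(r+1).\<close>
datatype arg_tag = TX nat | TY nat

text \<open>Given the degree of each tagged argument, the original (left-hand) order L
and the new order T of the same arguments, the colour factor is the product of
eps (deg a) (deg b) over all pairs a, b with a before b in L and b before a in T.\<close>
definition colour_factor ::
  "('g \<Rightarrow> 'g \<Rightarrow> 'k::field) \<Rightarrow> (arg_tag \<Rightarrow> 'g) \<Rightarrow> arg_tag list \<Rightarrow> arg_tag list \<Rightarrow> 'k" where
  "colour_factor eps deg L T =
     (\<Prod>(p, q)\<in>{(p, q). p < q \<and> q < length L \<and>
                  (\<exists>p' q'. q' < p' \<and> p' < length T \<and> T ! p' = L ! p \<and> T ! q' = L ! q)}.
        eps (deg (L ! p)) (deg (L ! q)))"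

text \<open>Left-hand order for the inner product in position k (0-based: k of the y's precede it).\<close>
definition lhs_order :: "nat \<Rightarrow> nat \<Rightarrow> arg_tag list" where
  "lhs_order n k = map TY [0..<k] @ map TX [0..<n] @ map TY [k..<n - 1]"

definition rhs_order :: "nat \<Rightarrow> nat \<Rightarrow> nat \<Rightarrow> (nat \<Rightarrow> nat) \<Rightarrow> (nat \<Rightarrow> nat) \<Rightarrow> arg_tag list" where
  "rhs_order n i j s1 s2 =
     map (TX \<circ> s1) [0..<i] @ map (TY \<circ> s2) [0..<j] @ [TX (s1 i)] @
     map (TY \<circ> s2) [j..<n - 1] @ map (TX \<circ> s1) [Suc i..<n]"

definition lhs_term :: "('v list \<Rightarrow> 'v) \<Rightarrow> nat \<Rightarrow> 'v list \<Rightarrow> 'v list \<Rightarrow> 'v" where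
  "lhs_term P k xs ys = P (take k ys @ [P xs] @ drop k ys)"

definition rhs_term ::
  "('v list \<Rightarrow> 'v) \<Rightarrow> nat \<Rightarrow> nat \<Rightarrow> nat \<Rightarrow> (nat \<Rightarrow> nat) \<Rightarrow> (nat \<Rightarrow> nat) \<Rightarrow> 'v list \<Rightarrow> 'v list \<Rightarrow> 'v" where
  "rhs_term P n i j s1 s2 xs ys =
     P (map (\<lambda>r. xs ! s1 r) [0..<i] @
        [P (map (\<lambda>r. ys ! s2 r) [0..<j] @ [xs ! s1 i] @ map (\<lambda>r. ys ! s2 r) [j..<n - 1])] @
        map (\<lambda>r. xs ! s1 r) [Suc i..<n])"

definition tag_degree :: "'g list \<Rightarrow> 'g list \<Rightarrow> arg_tag \<Rightarrow> 'g" where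
  "tag_degree gs hs t = (case t of TX r \<Rightarrow> gs ! r | TY r \<Rightarrow> hs ! r)"

definition colour_gLt_algebra ::
  "('k::field \<Rightarrow> 'v::ab_group_add \<Rightarrow> 'v) \<Rightarrow> ('g::ab_group_add \<Rightarrow> 'v set) \<Rightarrow> ('g \<Rightarrow> 'g \<Rightarrow> 'k)
   \<Rightarrow> nat \<Rightarrow> ('v list \<Rightarrow> 'v) \<Rightarrow> (nat \<Rightarrow> nat \<Rightarrow> nat \<Rightarrow> (nat \<Rightarrow> nat) \<Rightarrow> (nat \<Rightarrow> nat) \<Rightarrow> 'k) \<Rightarrow> bool" where
  "colour_gLt_algebra scl Lg eps n P alpha \<longleftrightarrow>
     n \<ge> 2 \<and> graded_nary_algebra scl Lg n P \<and> bicharacter eps \<and>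
     (\<forall>k < n. \<forall>xs ys gs hs.
        length xs = n \<and> length gs = n \<and> length ys = n - 1 \<and> length hs = n - 1 \<and>
        (\<forall>r<n. xs ! r \<in> Lg (gs ! r)) \<and> (\<forall>r<n - 1. ys ! r \<in> Lg (hs ! r)) \<longrightarrow>
        lhs_term P k xs ys =
          (\<Sum>(i, j, s1, s2) \<in> {0..<n} \<times> {0..<n} \<times> {s. s permutes {0..<n}} \<times> {s. s permutes {0..<n - 1}}.
             scl (alpha i j k s1 s2 *
                  colour_factor eps (tag_degree gs hs) (lhs_order n k) (rhs_order n i j s1 s2))
                 (rhs_term P n i j s1 s2 xs ys)))"

definition brk :: "('k::field \<Rightarrow> 'v::ab_group_add \<Rightarrow> 'v) \<Rightarrow> nat \<Rightarrow> ('v list \<Rightarrow> 'v) \<Rightarrow> (nat \<Rightarrow> nat) \<Rightarrow> 'v set list \<Rightarrow> 'v set" where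
  "brk scl n P s As = module.span scl
     {P (map (\<lambda>r. xs ! s r) [0..<n]) | xs. length xs = n \<and> (\<forall>r<n. xs ! r \<in> As ! r)}"

definition line :: "('k \<Rightarrow> 'v \<Rightarrow> 'v) \<Rightarrow> 'v \<Rightarrow> 'v set" where
  "line scl x = range (\<lambda>c. scl c x)"

definition quasi_mult_basis ::
  "('k::field \<Rightarrow> 'v::ab_group_add \<Rightarrow> 'v) \<Rightarrow> ('g::ab_group_add \<Rightarrow> 'v set) \<Rightarrow> nat \<Rightarrow> ('v list \<Rightarrow> 'v)
   \<Rightarrow> 'v set \<Rightarrow> 'v set \<Rightarrow> ('i \<Rightarrow> 'v) \<Rightarrow> bool" where
  "quasi_mult_basis scl Lg n P V W e \<longleftrightarrow>
     graded_subspace scl Lg V \<and> graded_subspace scl Lg W \<and>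
     V \<noteq> {0} \<and> W \<noteq> {0} \<and> V \<inter> W = {0} \<and> {v + w | v w. v \<in> V \<and> w \<in> W} = UNIV \<and>
     inj e \<and> \<not> module.dependent scl (range e) \<and> module.span scl (range e) = W \<and>
     (\<forall>i. homogeneous Lg (e i)) \<and>
     (\<forall>is. length is = n \<longrightarrow> (\<exists>j. P (map e is) \<in> line scl (e j)) \<or> P (map e is) \<in> V) \<and>
     (\<forall>k is s. 0 < k \<and> k < n \<and> length is = k \<and> s permutes {0..<n} \<longrightarrow>
        (\<exists>j. brk scl n P s (map (\<lambda>i. {e i}) is @ replicate (n - k) V) \<subseteq> line scl (e j))) \<and>
     ((\<exists>j. brk scl n P id (replicate n V) \<subseteq> line scl (e j)) \<or> brk scl n P id (replicate n V) \<subseteq> V)"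

text \<open>The index set I is the type 'i; the extended index set I plus {v} is 'i option,
with None playing the role of v.  Barred symbols are Br, unbarred ones Pl.  A
tuple in 'J^(n-1) is PlT js, a tuple of barred symbols is BrT js.\<close>
datatype 'a bsym = Pl 'a | Br 'a
datatype 'a btup = PlT "'a list" | BrT "'a list"

definition uset :: "('i \<Rightarrow> 'v) \<Rightarrow> 'v set \<Rightarrow> 'i option \<Rightarrow> 'v set" where
  "uset e V j = (case j of Some i \<Rightarrow> {e i} | None \<Rightarrow> V)"

definition amap ::
  "('k::field \<Rightarrow> 'v::ab_group_add \<Rightarrow> 'v) \<Rightarrow> nat \<Rightarrow> ('v list \<Rightarrow> 'v) \<Rightarrow> 'v set \<Rightarrow> ('i \<Rightarrow> 'v)
   \<Rightarrow> (nat \<Rightarrow> nat) \<Rightarrow> 'i option list \<Rightarrow> 'i option set" where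
  "amap scl n P V e s js =
     (let B = brk scl n P s (map (uset e V) js) in
      {Some r | r. B \<noteq> {0} \<and> B \<subseteq> line scl (e r)} \<union> (if B \<noteq> {0} \<and> B \<subseteq> V then {None} else {}))"

definition bmap ::
  "('k::field \<Rightarrow> 'v::ab_group_add \<Rightarrow> 'v) \<Rightarrow> nat \<Rightarrow> ('v list \<Rightarrow> 'v) \<Rightarrow> 'v set \<Rightarrow> ('i \<Rightarrow> 'v)
   \<Rightarrow> (nat \<Rightarrow> nat) \<Rightarrow> 'i option \<Rightarrow> 'i option list \<Rightarrow> 'i option set" where
  "bmap scl n P V e s j js = {x. amap scl n P V e s (x # js) = {j}}"

definition mu ::
  "('k::field \<Rightarrow> 'v::ab_group_add \<Rightarrow> 'v) \<Rightarrow> nat \<Rightarrow> ('v list \<Rightarrow> 'v) \<Rightarrow> 'v set \<Rightarrow> ('i \<Rightarrow> 'v)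
   \<Rightarrow> 'i option bsym \<Rightarrow> 'i option btup \<Rightarrow> 'i option set" where
  "mu scl n P V e a X =
     (case (a, X) of
        (Pl j, PlT js) \<Rightarrow> (\<Union>s\<in>{s. s permutes {0..<n}}. amap scl n P V e s (j # js))
      | (Pl j, BrT js) \<Rightarrow> (\<Union>s\<in>{s. s permutes {0..<n}}. bmap scl n P V e s j js)
      | (Br j, PlT js) \<Rightarrow> (\<Union>k\<in>{0..<n - 1}. \<Union>s\<in>{s. s permutes {0..<n}}.
                              bmap scl n P V e s (js ! k) (j # take k js @ drop (Suc k) js))
      | (Br j, BrT js) \<Rightarrow> {})"

definition phi ::
  "('k::field \<Rightarrow> 'v::ab_group_add \<Rightarrow> 'v) \<Rightarrow> nat \<Rightarrow> ('v list \<Rightarrow> 'v) \<Rightarrow> 'v set \<Rightarrow> ('i \<Rightarrow> 'v)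
   \<Rightarrow> 'i bsym set \<Rightarrow> 'i option btup \<Rightarrow> 'i bsym set" where
  "phi scl n P V e J X =
     (if J = {} then {}
      else (let K = {i. \<exists>a\<in>J. Some i \<in> mu scl n P V e (map_bsym Some a) X}
            in Pl ` K \<union> Br ` K))"

definition btup_len :: "'a btup \<Rightarrow> nat" where
  "btup_len X = (case X of PlT js \<Rightarrow> length js | BrT js \<Rightarrow> length js)"

definition connected ::
  "('k::field \<Rightarrow> 'v::ab_group_add \<Rightarrow> 'v) \<Rightarrow> nat \<Rightarrow> ('v list \<Rightarrow> 'v) \<Rightarrow> 'v set \<Rightarrow> ('i \<Rightarrow> 'v)
   \<Rightarrow> 'i \<Rightarrow> 'i \<Rightarrow> bool" where
  "connected scl n P V e i j \<longleftrightarrow>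
     i = j \<or>
     (\<exists>Xs a. Xs \<noteq> [] \<and> (\<forall>X\<in>set Xs. btup_len X = n - 1) \<and> a \<in> {Pl i, Br i} \<and>
        (\<forall>t\<in>{1..<length Xs}. foldl (phi scl n P V e) {a} (take t Xs) \<noteq> {}) \<and>
        Pl j \<in> foldl (phi scl n P V e) {a} Xs)"

definition cls ::
  "('k::field \<Rightarrow> 'v::ab_group_add \<Rightarrow> 'v) \<Rightarrow> nat \<Rightarrow> ('v list \<Rightarrow> 'v) \<Rightarrow> 'v set \<Rightarrow> ('i \<Rightarrow> 'v) \<Rightarrow> 'i \<Rightarrow> 'i set" where
  "cls scl n P V e i = {j. connected scl n P V e i j}"

definition Jcls ::
  "('k::field \<Rightarrow> 'v::ab_group_add \<Rightarrow> 'v) \<Rightarrow> nat \<Rightarrow> ('v list \<Rightarrow> 'v) \<Rightarrow> 'v set \<Rightarrow> ('i \<Rightarrow> 'v) \<Rightarrow> 'i \<Rightarrow> 'v set" where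
  "Jcls scl n P V e i =
     (let C = cls scl n P V e i;
          VC = module.span scl {P (map e is) | is. length is = n \<and> set is \<subseteq> C} \<inter> V;
          WC = module.span scl (e ` C)
      in {a + b | a b. a \<in> VC \<and> b \<in> WC})"

end

theory Submission
  imports Defs
begin

locale QM =
  fixes scl :: "'k::field \<Rightarrow> 'v::ab_group_add \<Rightarrow> 'v"
    and Lg :: "'g::ab_group_add \<Rightarrow> 'v set"
    and eps :: "'g \<Rightarrow> 'g \<Rightarrow> 'k"
    and n :: nat
    and P :: "'v list \<Rightarrow> 'v"
    and alpha :: "nat \<Rightarrow> nat \<Rightarrow> nat \<Rightarrow> (nat \<Rightarrow> nat) \<Rightarrow> (nat \<Rightarrow> nat) \<Rightarrow> 'k"
    and V W :: "'v set"
    and e :: "'i \<Rightarrow> 'v"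
  assumes gLt: "colour_gLt_algebra scl Lg eps n P alpha"
    and qmb: "quasi_mult_basis scl Lg n P V W e"

lemma (in QM) vsp: "vector_space scl"
  using gLt by (simp add: colour_gLt_algebra_def graded_nary_algebra_def graded_space_def)

sublocale QM \<subseteq> vs: vector_space scl by (rule vsp)

context QM begin

lemma n2: "n \<ge> 2" using gLt by (simp add: colour_gLt_algebra_def)

lemma lin: "length xs = n \<Longrightarrow> r < n \<Longrightarrow> Vector_Spaces.linear scl scl (\<lambda>x. P (xs[r := x]))"
  using gLt by (simp add: colour_gLt_algebra_def graded_nary_algebra_def)

lemma lin_span0:
  assumes "length xs = n" "r < n" "\<And>x. x \<in> G \<Longrightarrow> P (xs[r := x]) = 0" "x \<in> vs.span G"
  shows "P (xs[r := x]) = 0"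
proof -
  interpret lf: linear scl scl "\<lambda>x. P (xs[r := x])" using lin[OF assms(1,2)] .
  show ?thesis using lf.eq_0_on_span[OF assms(3) assms(4)] by simp
qed

lemma P_zero_arg:
  assumes "length xs = n" "r < n" "xs ! r = 0"
  shows "P xs = 0"
proof -
  interpret lf: linear scl scl "\<lambda>x. P (xs[r := x])" using lin[OF assms(1,2)] .
  have "P (xs[r := 0]) = 0" using lf.zero by simp
  moreover have "xs[r := 0] = xs" using assms by (metis list_update_id)
  ultimately show ?thesis by simp
qed

lemma ext_span:
  assumes H: "\<And>xs. length xs = n \<Longrightarrow> (\<forall>r<n. xs ! r \<in> G r) \<Longrightarrow> P xs = 0"
  shows "length xs = n \<Longrightarrow> \<forall>r<n. xs ! r \<in> vs.span (G r) \<Longrightarrow> P xs = 0"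
proof -
  have "\<forall>xs. length xs = n \<and> (\<forall>r<n. xs ! r \<in> (if r < m then vs.span (G r) else G r)) \<longrightarrow> P xs = 0" for m
  proof (induction m)
    case 0
    then show ?case using H by auto
  next
    case (Suc m)
    show ?case
    proof (intro allI impI)
      fix xs :: "'v list" assume a: "length xs = n \<and> (\<forall>r<n. xs ! r \<in> (if r < Suc m then vs.span (G r) else G r))"
      show "P xs = 0"
      proof (cases "m < n")
        case False
        then show ?thesis using Suc.IH a
          by (metis (no_types, lifting) less_SucI order.strict_trans2 not_le)
      next
        case True
        have "P (xs[m := x]) = 0" if "x \<in> G m" for x
        proof -
          have "\<forall>r<n. xs[m := x] ! r \<in> (if r < m then vs.span (G r) else G r)"
          proof (intro allI impI)
            fix r assume "r < n"
            then show "xs[m := x] ! r \<in> (if r < m then vs.span (G r) else G r)"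
              using a that True by (cases "r = m") (auto simp: nth_list_update less_Suc_eq)
          qed
          then show ?thesis using Suc.IH a by simp
        qed
        then have "P (xs[m := xs ! m]) = 0"
          using lin_span0[of xs m "G m" "xs ! m"] a True by auto
        then show ?thesis by simp
      qed
    qed
  qed
  from this[of n] show "length xs = n \<Longrightarrow> \<forall>r<n. xs ! r \<in> vs.span (G r) \<Longrightarrow> P xs = 0" by auto
qed

lemma perm_lt: "p permutes {0..<n} \<Longrightarrow> m < n \<Longrightarrow> p m < n"
  using permutes_in_image by fastforce

lemma brk_perm:
  assumes "length As = n" "p permutes {0..<n}" "s permutes {0..<n}"
  shows "brk scl n P s (permute_list p As) = brk scl n P (p \<circ> s) As"
proof -
  have pl: "p permutes {..<length As}" using assms by (simp add: atLeast0LessThan)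
  have ip: "inv p permutes {0..<n}" using assms(2) by (rule permutes_inv)
  have S: "{P (map (\<lambda>r. xs ! s r) [0..<n]) | xs. length xs = n \<and> (\<forall>r<n. xs ! r \<in> permute_list p As ! r)}
     = {P (map (\<lambda>r. xs ! (p \<circ> s) r) [0..<n]) | xs. length xs = n \<and> (\<forall>r<n. xs ! r \<in> As ! r)}"
  proof (intro set_eqI iffI)
    fix z assume "z \<in> {P (map (\<lambda>r. xs ! s r) [0..<n]) | xs. length xs = n \<and> (\<forall>r<n. xs ! r \<in> permute_list p As ! r)}"
    then obtain xs where x: "z = P (map (\<lambda>r. xs ! s r) [0..<n])" "length xs = n" "\<forall>r<n. xs ! r \<in> permute_list p As ! r" by blast
    define ys where "ys = map (\<lambda>m. xs ! inv p m) [0..<n]"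
    have "length ys = n" by (simp add: ys_def)
    moreover have "\<forall>m<n. ys ! m \<in> As ! m"
    proof (intro allI impI)
      fix m assume m: "m < n"
      have "inv p m < n" using perm_lt[OF ip m] .
      then have "xs ! inv p m \<in> permute_list p As ! inv p m" using x(3) by simp
      also have "permute_list p As ! inv p m = As ! p (inv p m)"
        using permute_list_nth[OF pl] \<open>inv p m < n\<close> assms(1) by simp
      also have "p (inv p m) = m" using permutes_inverses(1)[OF assms(2)] by simp
      finally show "ys ! m \<in> As ! m" using m by (simp add: ys_def)
    qed
    moreover have meq: "map (\<lambda>r. xs ! s r) [0..<n] = map (\<lambda>r. ys ! (p \<circ> s) r) [0..<n]"
    proof (rule map_cong[OF refl])
      fix r assume "r \<in> set [0..<n]"
      then have "s r < n" "p (s r) < n" using perm_lt assms by auto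
      then show "xs ! s r = ys ! (p \<circ> s) r"
        using permutes_inverses(2)[OF assms(2)] by (simp add: ys_def)
    qed
    ultimately have "z = P (map (\<lambda>r. ys ! (p \<circ> s) r) [0..<n]) \<and> length ys = n \<and> (\<forall>r<n. ys ! r \<in> As ! r)"
      unfolding x(1) meq by simp
    then show "z \<in> {P (map (\<lambda>r. xs ! (p \<circ> s) r) [0..<n]) | xs. length xs = n \<and> (\<forall>r<n. xs ! r \<in> As ! r)}"
      by blast
  next
    fix z assume "z \<in> {P (map (\<lambda>r. xs ! (p \<circ> s) r) [0..<n]) | xs. length xs = n \<and> (\<forall>r<n. xs ! r \<in> As ! r)}"
    then obtain ys where y: "z = P (map (\<lambda>r. ys ! (p \<circ> s) r) [0..<n])" "length ys = n" "\<forall>r<n. ys ! r \<in> As ! r" by blast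
    define xs where "xs = map (\<lambda>m. ys ! p m) [0..<n]"
    have "length xs = n" by (simp add: xs_def)
    moreover have "\<forall>m<n. xs ! m \<in> permute_list p As ! m"
    proof (intro allI impI)
      fix m assume m: "m < n"
      have "p m < n" using perm_lt[OF assms(2) m] .
      then have "ys ! p m \<in> As ! p m" using y(3) by simp
      moreover have "permute_list p As ! m = As ! p m" using permute_list_nth[OF pl] m assms(1) by simp
      ultimately show "xs ! m \<in> permute_list p As ! m" using m by (simp add: xs_def)
    qed
    moreover have meq: "map (\<lambda>r. xs ! s r) [0..<n] = map (\<lambda>r. ys ! (p \<circ> s) r) [0..<n]"
    proof (rule map_cong[OF refl])
      fix r assume "r \<in> set [0..<n]"
      then have "s r < n" using perm_lt assms by auto
      then show "xs ! s r = ys ! (p \<circ> s) r" by (simp add: xs_def)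
    qed
    ultimately have "z = P (map (\<lambda>r. xs ! s r) [0..<n]) \<and> length xs = n \<and> (\<forall>r<n. xs ! r \<in> permute_list p As ! r)"
      unfolding y(1) meq by simp
    then show "z \<in> {P (map (\<lambda>r. xs ! s r) [0..<n]) | xs. length xs = n \<and> (\<forall>r<n. xs ! r \<in> permute_list p As ! r)}"
      by blast
  qed
  show ?thesis unfolding brk_def S ..
qed

lemma q_V: "vs.subspace V" using qmb by (simp add: quasi_mult_basis_def graded_subspace_def)
lemma q_W: "vs.subspace W" using qmb by (simp add: quasi_mult_basis_def graded_subspace_def)
lemma q_VW: "V \<inter> W = {0}" using qmb by (simp add: quasi_mult_basis_def)
lemma q_sum: "{v + w | v w. v \<in> V \<and> w \<in> W} = UNIV" using qmb by (simp add: quasi_mult_basis_def)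
lemma q_inj: "inj e" using qmb by (simp add: quasi_mult_basis_def)
lemma q_indep: "\<not> vs.dependent (range e)" using qmb by (simp add: quasi_mult_basis_def)
lemma q_spanW: "vs.span (range e) = W" using qmb by (simp add: quasi_mult_basis_def)
lemma q_hom: "homogeneous Lg (e i)" using qmb by (simp add: quasi_mult_basis_def)
lemma q_1: "length is = n \<Longrightarrow> (\<exists>j. P (map e is) \<in> line scl (e j)) \<or> P (map e is) \<in> V"
  using qmb by (simp add: quasi_mult_basis_def)
lemma q_2: "0 < k \<Longrightarrow> k < n \<Longrightarrow> length is = k \<Longrightarrow> s permutes {0..<n} \<Longrightarrow>
        (\<exists>j. brk scl n P s (map (\<lambda>i. {e i}) is @ replicate (n - k) V) \<subseteq> line scl (e j))"
  using qmb unfolding quasi_mult_basis_def by blast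

lemma line_span: "line scl x = vs.span {x}"
  by (simp add: line_def vs.span_singleton)

lemma line_W: "line scl (e r) \<subseteq> W"
  unfolding line_span q_spanW[symmetric] by (rule vs.span_mono) auto

lemma line_uniq:
  assumes "b \<noteq> 0" "b \<in> line scl (e r)" "b \<in> line scl (e r')"
  shows "r = r'"
proof (rule ccontr)
  assume ne: "r \<noteq> r'"
  obtain c where c: "b = scl c (e r)" using assms(2) by (auto simp: line_def)
  obtain c' where c': "b = scl c' (e r')" using assms(3) by (auto simp: line_def)
  have "c \<noteq> 0" using c assms(1) by auto
  then have "e r = scl (inverse c) b" using c by simp
  also have "\<dots> = scl (inverse c * c') (e r')" using c' by simp
  finally have "e r \<in> vs.span {e r'}" unfolding vs.span_singleton by (metis rangeI)
  moreover have "{e r'} \<subseteq> range e - {e r}" using ne q_inj by (auto dest: injD)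
  ultimately have "e r \<in> vs.span (range e - {e r})" using vs.span_mono by blast
  then have "vs.dependent (range e)" unfolding vs.dependent_def by blast
  then show False using q_indep by simp
qed

lemma line_V:
  assumes "b \<in> line scl (e r)" "b \<in> V" shows "b = 0"
  using assms line_W q_VW by blast

lemma amap_some:
  assumes "brk scl n P s (map (uset e V) js) \<noteq> {0}" "brk scl n P s (map (uset e V) js) \<subseteq> line scl (e r)"
  shows "amap scl n P V e s js = {Some r}"
proof -
  let ?B = "brk scl n P s (map (uset e V) js)"
  have sub: "vs.subspace ?B" unfolding brk_def by (rule vs.subspace_span)
  obtain b where b: "b \<in> ?B" "b \<noteq> 0" using assms(1) vs.subspace_0[OF sub] by blast
  have u: "r' = r" if "?B \<subseteq> line scl (e r')" for r'
    using line_uniq[OF b(2)] b(1) that assms(2) by blast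
  have 1: "{Some r' | r'. ?B \<noteq> {0} \<and> ?B \<subseteq> line scl (e r')} = {Some r}"
    using u assms by blast
  have 2: "\<not> (?B \<noteq> {0} \<and> ?B \<subseteq> V)" using line_V b assms(2) by blast
  show ?thesis unfolding amap_def Let_def 1 using 2 by simp
qed

lemma amap_none:
  assumes "brk scl n P s (map (uset e V) js) \<noteq> {0}" "brk scl n P s (map (uset e V) js) \<subseteq> V"
  shows "amap scl n P V e s js = {None}"
proof -
  let ?B = "brk scl n P s (map (uset e V) js)"
  have sub: "vs.subspace ?B" unfolding brk_def by (rule vs.subspace_span)
  obtain b where b: "b \<in> ?B" "b \<noteq> 0" using assms(1) vs.subspace_0[OF sub] by blast
  have "\<not> ?B \<subseteq> line scl (e r')" for r' using line_V b assms(2) by blast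
  then have 1: "{Some r' | r'. ?B \<noteq> {0} \<and> ?B \<subseteq> line scl (e r')} = {}" by blast
  show ?thesis unfolding amap_def Let_def 1 using assms by simp
qed

lemma amap_single:
  assumes "x \<in> amap scl n P V e s js" shows "amap scl n P V e s js = {x}"
proof (cases x)
  case None
  then have "brk scl n P s (map (uset e V) js) \<noteq> {0} \<and> brk scl n P s (map (uset e V) js) \<subseteq> V"
    using assms unfolding amap_def Let_def by (auto split: if_splits)
  then show ?thesis using amap_none None by blast
next
  case (Some r)
  then have "brk scl n P s (map (uset e V) js) \<noteq> {0} \<and> brk scl n P s (map (uset e V) js) \<subseteq> line scl (e r)"
    using assms unfolding amap_def Let_def by (auto split: if_splits)
  then show ?thesis using amap_some Some by blast
qed

lemma amap_swap:
  assumes "length rest = n - 2" "s permutes {0..<n}"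
  shows "amap scl n P V e (Transposition.transpose 0 1 \<circ> s) (b # a # rest) = amap scl n P V e s (a # b # rest)"
proof -
  let ?t = "Transposition.transpose (0::nat) 1"
  have t: "?t permutes {0..<n}" using n2 by (intro permutes_swap_id) auto
  have len: "length (map (uset e V) (b # a # rest)) = n" using assms n2 by simp
  have "permute_list ?t (map (uset e V) (b # a # rest)) = map (uset e V) (a # b # rest)"
  proof (rule nth_equalityI)
    show "length (permute_list ?t (map (uset e V) (b # a # rest))) = length (map (uset e V) (a # b # rest))" by simp
    fix m assume "m < length (permute_list ?t (map (uset e V) (b # a # rest)))"
    then have m: "m < n" using len by simp
    have tl: "?t permutes {..<length (map (uset e V) (b # a # rest))}" using t len by (simp add: atLeast0LessThan)
    have tm: "?t m = (if m = 0 then 1 else if m = 1 then 0 else m)" by (simp add: transpose_def)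
    have "permute_list ?t (map (uset e V) (b # a # rest)) ! m = map (uset e V) (b # a # rest) ! (?t m)"
      using permute_list_nth[OF tl] m len by simp
    also have "\<dots> = map (uset e V) (a # b # rest) ! m"
    proof (cases "m \<ge> 2")
      case True
      then obtain m' where "m = Suc (Suc m')" by (metis add_2_eq_Suc le_Suc_ex)
      then show ?thesis using tm by simp
    next
      case False
      then have "m = 0 \<or> m = 1" by auto
      then show ?thesis using tm by auto
    qed
    finally show "permute_list ?t (map (uset e V) (b # a # rest)) ! m = map (uset e V) (a # b # rest) ! m" .
  qed
  then have "brk scl n P s (map (uset e V) (a # b # rest)) = brk scl n P (?t \<circ> s) (map (uset e V) (b # a # rest))"
    using brk_perm[OF len t assms(2)] by simp
  then show ?thesis unfolding amap_def by simp
qed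


definition stp :: "'i \<Rightarrow> 'i \<Rightarrow> bool" where
  "stp j k \<longleftrightarrow> (\<exists>X a. btup_len X = n - 1 \<and> a \<in> {Pl j, Br j} \<and> Some k \<in> mu scl n P V e (map_bsym Some a) X)"

lemma stp_sym: assumes "stp j k" shows "stp k j"
proof -
  obtain X a where X: "btup_len X = n - 1" "a \<in> {Pl j, Br j}" "Some k \<in> mu scl n P V e (map_bsym Some a) X"
    using assms unfolding stp_def by blast
  show ?thesis
  proof (cases X)
    case (PlT js)
    have len: "length js = n - 1" using X(1) PlT by (simp add: btup_len_def)
    show ?thesis
    proof (cases "a = Pl j")
      case True
      then obtain s where s: "s permutes {0..<n}" "Some k \<in> amap scl n P V e s (Some j # js)"
        using X(3) PlT by (auto simp: mu_def)
      have "amap scl n P V e s (Some j # js) = {Some k}" by (rule amap_single[OF s(2)])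
      then have "Some j \<in> mu scl n P V e (map_bsym Some (Pl k)) (BrT js)"
        using s(1) by (auto simp: mu_def bmap_def)
      then show ?thesis unfolding stp_def using len by (intro exI[of _ "BrT js"] exI[of _ "Pl k"]) (auto simp: btup_len_def)
    next
      case False
      then have a: "a = Br j" using X(2) by auto
      then obtain m s where ms: "m \<in> {0..<n - 1}" "s permutes {0..<n}"
        "Some k \<in> bmap scl n P V e s (js ! m) (Some j # take m js @ drop (Suc m) js)"
        using X(3) PlT by (auto simp: mu_def)
      let ?rest = "take m js @ drop (Suc m) js"
      have lr: "length ?rest = n - 2" using ms(1) len by auto
      have "amap scl n P V e s (Some k # Some j # ?rest) = {js ! m}" using ms(3) by (simp add: bmap_def)
      then have "amap scl n P V e (Transposition.transpose 0 1 \<circ> s) (Some j # Some k # ?rest) = {js ! m}"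
        using amap_swap[OF lr ms(2)] by simp
      moreover have "Transposition.transpose 0 1 \<circ> s permutes {0..<n}"
        using n2 ms(2) by (intro permutes_compose permutes_swap_id) auto
      ultimately have bm: "Some j \<in> bmap scl n P V e (Transposition.transpose 0 1 \<circ> s) (js ! m) (Some k # ?rest)"
        "Transposition.transpose 0 1 \<circ> s \<in> {s. s permutes {0..<n}}"
        unfolding bmap_def by simp_all
      have mu_eq: "mu scl n P V e (map_bsym Some (Br k)) (PlT js) = (\<Union>m\<in>{0..<n - 1}. \<Union>s\<in>{s. s permutes {0..<n}}.
           bmap scl n P V e s (js ! m) (Some k # take m js @ drop (Suc m) js))" by (simp add: mu_def)
      have "Some j \<in> mu scl n P V e (map_bsym Some (Br k)) (PlT js)"
        unfolding mu_eq by (rule UN_I[OF ms(1)], rule UN_I[OF bm(2)], rule bm(1))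
      then show ?thesis unfolding stp_def using len by (intro exI[of _ "PlT js"] exI[of _ "Br k"]) (auto simp: btup_len_def)
    qed
  next
    case (BrT js)
    have len: "length js = n - 1" using X(1) BrT by (simp add: btup_len_def)
    have a: "a = Pl j" using X(2,3) BrT by (auto simp: mu_def)
    then obtain s where s: "s permutes {0..<n}" "Some k \<in> bmap scl n P V e s (Some j) js"
      using X(3) BrT by (auto simp: mu_def)
    then have "amap scl n P V e s (Some k # js) = {Some j}" by (simp add: bmap_def)
    then have "Some j \<in> mu scl n P V e (map_bsym Some (Pl k)) (PlT js)"
      using s(1) by (auto simp: mu_def)
    then show ?thesis unfolding stp_def using len by (intro exI[of _ "PlT js"] exI[of _ "Pl k"]) (auto simp: btup_len_def)
  qed
qed

definition bidx :: "'a bsym \<Rightarrow> 'a" where "bidx b = (case b of Pl x \<Rightarrow> x | Br x \<Rightarrow> x)"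

lemma bidx_cases: "a \<in> {Pl (bidx a), Br (bidx a)}"
  by (cases a) (auto simp: bidx_def)

lemma phi_mem:
  assumes "c \<in> phi scl n P V e J X"
  shows "\<exists>a\<in>J. Some (bidx c) \<in> mu scl n P V e (map_bsym Some a) X"
  using assms unfolding phi_def Let_def by (cases c) (auto simp: bidx_def split: if_splits)

lemma phi_intro:
  assumes "a \<in> J" "Some k \<in> mu scl n P V e (map_bsym Some a) X"
  shows "Pl k \<in> phi scl n P V e J X" "Br k \<in> phi scl n P V e J X"
  using assms unfolding phi_def Let_def by auto

lemma foldl_empty: "foldl (phi scl n P V e) {} Xs = {}"
proof (induction Xs)
  case Nil then show ?case by simp
next
  case (Cons X Xs)
  have "phi scl n P V e {} X = {}" by (simp add: phi_def)
  then show ?case using Cons by simp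
qed

lemma fold_stp:
  assumes "\<forall>X\<in>set Xs. btup_len X = n - 1" "c \<in> foldl (phi scl n P V e) {a} Xs"
  shows "stp\<^sup>*\<^sup>* (bidx a) (bidx c)"
  using assms
proof (induction Xs arbitrary: c rule: rev_induct)
  case Nil then show ?case by simp
next
  case (snoc X Xs)
  from snoc.prems(2) have "c \<in> phi scl n P V e (foldl (phi scl n P V e) {a} Xs) X" by simp
  then obtain b where b: "b \<in> foldl (phi scl n P V e) {a} Xs" "Some (bidx c) \<in> mu scl n P V e (map_bsym Some b) X"
    using phi_mem by blast
  have "stp (bidx b) (bidx c)" unfolding stp_def using b(2) bidx_cases[of b] snoc.prems(1) by auto
  moreover have "stp\<^sup>*\<^sup>* (bidx a) (bidx b)" using snoc.IH snoc.prems b(1) by auto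
  ultimately show ?case by simp
qed

lemma stp_fold:
  assumes "stp\<^sup>+\<^sup>+ i j"
  shows "\<exists>Xs a. Xs \<noteq> [] \<and> (\<forall>X\<in>set Xs. btup_len X = n - 1) \<and> a \<in> {Pl i, Br i} \<and>
     Pl j \<in> foldl (phi scl n P V e) {a} Xs \<and> Br j \<in> foldl (phi scl n P V e) {a} Xs"
  using assms
proof (induction rule: tranclp_induct)
  case (base k)
  then obtain X a where X: "btup_len X = n - 1" "a \<in> {Pl i, Br i}" "Some k \<in> mu scl n P V e (map_bsym Some a) X"
    unfolding stp_def by blast
  show ?case using phi_intro[OF _ X(3), of "{a}"] X(1,2)
    by (intro exI[of _ "[X]"] exI[of _ a]) auto
next
  case (step k l)
  then obtain Xs a where Xs: "Xs \<noteq> []" "\<forall>X\<in>set Xs. btup_len X = n - 1" "a \<in> {Pl i, Br i}"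
     "Pl k \<in> foldl (phi scl n P V e) {a} Xs" "Br k \<in> foldl (phi scl n P V e) {a} Xs" by blast
  obtain X b where X: "btup_len X = n - 1" "b \<in> {Pl k, Br k}" "Some l \<in> mu scl n P V e (map_bsym Some b) X"
    using step(2) unfolding stp_def by blast
  have "b \<in> foldl (phi scl n P V e) {a} Xs" using X(2) Xs(4,5) by auto
  from phi_intro[OF this X(3)] show ?case using Xs X(1)
    by (intro exI[of _ "Xs @ [X]"] exI[of _ a]) auto
qed

lemma connected_iff: "connected scl n P V e i j \<longleftrightarrow> stp\<^sup>*\<^sup>* i j"
proof
  assume "connected scl n P V e i j"
  then show "stp\<^sup>*\<^sup>* i j"
    unfolding connected_def
  proof
    assume "\<exists>Xs a. Xs \<noteq> [] \<and> (\<forall>X\<in>set Xs. btup_len X = n - 1) \<and> a \<in> {Pl i, Br i} \<and>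
        (\<forall>t\<in>{1..<length Xs}. foldl (phi scl n P V e) {a} (take t Xs) \<noteq> {}) \<and>
        Pl j \<in> foldl (phi scl n P V e) {a} Xs"
    then obtain Xs a where "\<forall>X\<in>set Xs. btup_len X = n - 1" "a \<in> {Pl i, Br i}" "Pl j \<in> foldl (phi scl n P V e) {a} Xs"
      by blast
    from fold_stp[OF this(1,3)] this(2) show ?thesis by (auto simp: bidx_def)
  qed simp
next
  assume "stp\<^sup>*\<^sup>* i j"
  then show "connected scl n P V e i j"
  proof (cases "i = j")
    case True then show ?thesis by (simp add: connected_def)
  next
    case False
    then have "stp\<^sup>+\<^sup>+ i j" using rtranclpD[OF \<open>stp\<^sup>*\<^sup>* i j\<close>] by blast
    then obtain Xs a where Xs: "Xs \<noteq> []" "\<forall>X\<in>set Xs. btup_len X = n - 1" "a \<in> {Pl i, Br i}"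
      "Pl j \<in> foldl (phi scl n P V e) {a} Xs" using stp_fold by blast
    have "foldl (phi scl n P V e) {a} (take t Xs) \<noteq> {}" for t
    proof
      assume "foldl (phi scl n P V e) {a} (take t Xs) = {}"
      then have "foldl (phi scl n P V e) {a} (take t Xs @ drop t Xs) = {}"
        by (simp only: foldl_append foldl_empty)
      then show False using Xs(4) by simp
    qed
    then show ?thesis unfolding connected_def
      by (intro disjI2 exI[of _ Xs] exI[of _ a] conjI ballI) (use Xs in simp_all)
  qed
qed

lemma cls_eq: "cls scl n P V e i = {j. stp\<^sup>*\<^sup>* i j}"
  by (simp add: cls_def connected_iff)

lemma stp_rt_sym: "stp\<^sup>*\<^sup>* j k \<Longrightarrow> stp\<^sup>*\<^sup>* k j"
proof -
  have "symp stp" by (rule sympI) (rule stp_sym)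
  then have "symp stp\<^sup>*\<^sup>*" by (rule symp_rtranclp)
  then show "stp\<^sup>*\<^sup>* j k \<Longrightarrow> stp\<^sup>*\<^sup>* k j" by (rule sympD)
qed

lemma cls_sep:
  assumes "cls scl n P V e i \<noteq> cls scl n P V e h" "j \<in> cls scl n P V e i" "k \<in> cls scl n P V e h"
  shows "\<not> stp\<^sup>*\<^sup>* j k"
proof
  assume jk: "stp\<^sup>*\<^sup>* j k"
  have ij: "stp\<^sup>*\<^sup>* i j" "stp\<^sup>*\<^sup>* h k" using assms(2,3) by (auto simp: cls_eq)
  have ik: "stp\<^sup>*\<^sup>* i k" using rtranclp_trans[OF ij(1) jk] .
  have ih: "stp\<^sup>*\<^sup>* i h" using rtranclp_trans[OF ik stp_rt_sym[OF ij(2)]] .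
  have hi: "stp\<^sup>*\<^sup>* h i" using stp_rt_sym[OF ih] .
  have "cls scl n P V e i = cls scl n P V e h"
    unfolding cls_eq
  proof (intro set_eqI iffI; simp)
    fix x assume "stp\<^sup>*\<^sup>* i x" then show "stp\<^sup>*\<^sup>* h x" using rtranclp_trans[OF hi] by blast
  next
    fix x assume "stp\<^sup>*\<^sup>* h x" then show "stp\<^sup>*\<^sup>* i x" using rtranclp_trans[OF ih] by blast
  qed
  then show False using assms(1) by simp
qed


lemma brk_single:
  assumes "length ixs = n" "s permutes {0..<n}"
  shows "brk scl n P s (map (uset e V) (map Some ixs)) \<subseteq> vs.span {P (map (\<lambda>r. e (ixs ! s r)) [0..<n])}"
  unfolding brk_def
proof (rule vs.span_mono, rule subsetI)
  fix z assume "z \<in> {P (map (\<lambda>r. xs ! s r) [0..<n]) | xs. length xs = n \<and> (\<forall>r<n. xs ! r \<in> map (uset e V) (map Some ixs) ! r)}"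
  then obtain xs where x: "z = P (map (\<lambda>r. xs ! s r) [0..<n])" "length xs = n" "\<forall>r<n. xs ! r \<in> map (uset e V) (map Some ixs) ! r"
    by blast
  have "xs ! r = e (ixs ! r)" if "r < n" for r using x(3) that assms(1) by (auto simp: uset_def)
  then have meq: "map (\<lambda>r. xs ! s r) [0..<n] = map (\<lambda>r. e (ixs ! s r)) [0..<n]"
    using perm_lt[OF assms(2)] by auto
  show "z \<in> {P (map (\<lambda>r. e (ixs ! s r)) [0..<n])}" unfolding x(1) meq by simp
qed

lemma filt_some: "map (uset e V) (filter (\<lambda>x. x \<noteq> None) js) = map (\<lambda>i. {e i}) (map the (filter (\<lambda>x. x \<noteq> None) js))"
  by (induction js) (auto simp: uset_def)

lemma filt_none: "map (uset e V) (filter (\<lambda>x. x = None) js) = replicate (length (filter (\<lambda>x. x = None) js)) V"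
  by (induction js) (auto simp: uset_def)

lemma qm_brk:
  assumes "length js = n" "js ! 0 \<noteq> None" "s permutes {0..<n}"
  shows "(\<exists>r. brk scl n P s (map (uset e V) js) \<subseteq> line scl (e r)) \<or> brk scl n P s (map (uset e V) js) \<subseteq> V"
proof (cases "None \<in> set js")
  case False
  define ixs where "ixs = map the js"
  have js: "js = map Some ixs" unfolding ixs_def using False
    by (induction js) auto
  have lis: "length ixs = n" using assms(1) by (simp add: ixs_def)
  let ?ixs' = "map (\<lambda>r. ixs ! s r) [0..<n]"
  have me: "map (\<lambda>r. e (ixs ! s r)) [0..<n] = map e ?ixs'" by simp
  have sub: "brk scl n P s (map (uset e V) js) \<subseteq> vs.span {P (map e ?ixs')}"
    using brk_single[OF lis assms(3)] unfolding js[symmetric] me .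
  have "length ?ixs' = n" by simp
  from q_1[OF this] show ?thesis
  proof
    assume "\<exists>j. P (map e ?ixs') \<in> line scl (e j)"
    then obtain r where "P (map e ?ixs') \<in> line scl (e r)" by blast
    then have "vs.span {P (map e ?ixs')} \<subseteq> line scl (e r)"
      unfolding line_span by (intro vs.span_minimal) (auto simp: vs.subspace_span)
    then show ?thesis using sub by blast
  next
    assume "P (map e ?ixs') \<in> V"
    then have "vs.span {P (map e ?ixs')} \<subseteq> V" by (intro vs.span_minimal q_V) auto
    then show ?thesis using sub by blast
  qed
next
  case True
  let ?F = "filter (\<lambda>x. x \<noteq> None) js" and ?N = "filter (\<lambda>x. x = None) js"
  define ixs where "ixs = map the ?F"
  define k where "k = length ixs"
  let ?ys = "?F @ ?N"
  have lsum: "length ?F + length ?N = n" using sum_length_filter_compl[of "\<lambda>x. x = None" js] assms(1)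
    by (simp add: add.commute)
  have "js ! 0 \<in> set ?F" using assms(1,2) n2 by (auto simp: nth_mem)
  then have "?F \<noteq> []" by (metis empty_iff list.set(1))
  then have k0: "0 < k" unfolding k_def ixs_def by simp
  have "None \<in> set ?N" using True by simp
  then have "?N \<noteq> []" by (metis empty_iff list.set(1))
  then have "length ?N > 0" by simp
  then have kn: "k < n" and lN: "length ?N = n - k" using lsum unfolding k_def ixs_def by auto
  have ms: "mset ?ys = mset js"
    by (simp add: mset_filter multiset_partition[symmetric])
  obtain p where p: "p permutes {..<length js}" "permute_list p js = ?ys"
    using mset_eq_permutation[OF ms] by blast
  have p': "p permutes {0..<n}" using p(1) assms(1) by (simp add: atLeast0LessThan)
  have ys: "map (uset e V) ?ys = map (\<lambda>i. {e i}) ixs @ replicate (n - k) V"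
    using filt_some[of js] filt_none[of js] lN by (simp add: ixs_def)
  have "map (uset e V) ?ys = permute_list p (map (uset e V) js)"
    unfolding permute_list_map[OF p(1)] p(2) ..
  then have "brk scl n P (inv p \<circ> s) (map (uset e V) ?ys) = brk scl n P (p \<circ> (inv p \<circ> s)) (map (uset e V) js)"
    using brk_perm[of "map (uset e V) js" p "inv p \<circ> s"] assms(1,3) p' permutes_inv[OF p']
    by (simp add: permutes_compose)
  also have "p \<circ> (inv p \<circ> s) = s" using permutes_inv_o(1)[OF p'] by (simp add: o_assoc)
  finally have eq: "brk scl n P s (map (uset e V) js) = brk scl n P (inv p \<circ> s) (map (\<lambda>i. {e i}) ixs @ replicate (n - k) V)"
    using ys by (simp add: comp_def)
  have "inv p \<circ> s permutes {0..<n}" using permutes_compose[OF assms(3) permutes_inv[OF p']] .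
  from q_2[OF k0 kn k_def[symmetric] this] show ?thesis using eq by simp
qed


lemma mu_PlPl: "mu scl n P V e (Pl a) (PlT js) = (\<Union>s\<in>{s. s permutes {0..<n}}. amap scl n P V e s (a # js))"
  by (simp add: mu_def)
lemma mu_PlBr: "mu scl n P V e (Pl a) (BrT js) = (\<Union>s\<in>{s. s permutes {0..<n}}. bmap scl n P V e s a js)"
  by (simp add: mu_def)
lemma mu_BrPl: "mu scl n P V e (Br a) (PlT js) = (\<Union>m\<in>{0..<n - 1}. \<Union>s\<in>{s. s permutes {0..<n}}.
                              bmap scl n P V e s (js ! m) (a # take m js @ drop (Suc m) js))"
  by (simp add: mu_def)

lemma E1core:
  assumes L: "length L = n" "p < n" "q < n" "p \<noteq> q" "L ! p = e j" "L ! q = e k"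
    "\<forall>r<n. L ! r \<in> V \<union> range e" "P L \<noteq> 0"
  shows "stp\<^sup>*\<^sup>* j k"
proof -
  define js0 where "js0 = map (\<lambda>r. if r = p then Some j else if r = q then Some k
      else if L ! r \<in> V then None else Some (inv e (L ! r))) [0..<n]"
  have ls0: "length js0 = n" by (simp add: js0_def)
  have mem0: "L ! r \<in> map (uset e V) js0 ! r" if r: "r < n" for r
  proof -
    have "L ! r \<in> V \<union> range e" using L(7) r by blast
    then show ?thesis using r L(5,6) by (auto simp: js0_def uset_def f_inv_into_f)
  qed
  have PLB: "P L \<in> brk scl n P id (map (uset e V) js0)"
    unfolding brk_def
  proof (rule vs.span_base)
    have "P (map (\<lambda>r. L ! id r) [0..<n]) = P L" using map_nth[of L] L(1) by simp
    then show "P L \<in> {P (map (\<lambda>r. xs ! id r) [0..<n]) | xs. length xs = n \<and> (\<forall>r<n. xs ! r \<in> map (uset e V) js0 ! r)}"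
      using mem0 L(1) by force
  qed
  define t0 where "t0 = Transposition.transpose (0::nat) p"
  define s where "s = Transposition.transpose 1 (t0 q) \<circ> t0"
  have t0p: "t0 p = 0" by (simp add: t0_def)
  have t0q: "t0 q \<noteq> 0" using L(4) by (auto simp: t0_def transpose_def)
  have sp: "s p = 0" using t0p t0q by (simp add: s_def transpose_def)
  have sq: "s q = 1" by (simp add: s_def)
  have t0perm: "t0 permutes {0..<n}" unfolding t0_def using n2 L(2) by (intro permutes_swap_id) auto
  have "t0 q < n" using perm_lt[OF t0perm L(3)] .
  then have sperm: "s permutes {0..<n}" unfolding s_def using n2
    by (intro permutes_compose[OF t0perm] permutes_swap_id) auto
  have isp: "inv s permutes {0..<n}" by (rule permutes_inv[OF sperm])
  define js where "js = permute_list (inv s) js0"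
  have lsj: "length js = n" using ls0 by (simp add: js_def)
  have isp': "inv s permutes {..<length js0}" using isp ls0 by (simp add: atLeast0LessThan)
  have "map (uset e V) js = permute_list (inv s) (map (uset e V) js0)"
    unfolding js_def permute_list_map[OF isp'] ..
  then have "brk scl n P s (map (uset e V) js) = brk scl n P (inv s \<circ> s) (map (uset e V) js0)"
    using brk_perm[of "map (uset e V) js0" "inv s" s] ls0 isp sperm by simp
  also have "inv s \<circ> s = id" by (rule permutes_inv_o(2)[OF sperm])
  finally have Beq: "brk scl n P s (map (uset e V) js) = brk scl n P id (map (uset e V) js0)" .
  have ip: "inv s 0 = p" "inv s 1 = q" using permutes_inv_eq[OF sperm] sp sq by auto
  have "js ! 0 = Some j" using permute_list_nth[OF isp'] ls0 n2 ip L(2)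
    by (simp add: js_def js0_def)
  moreover have "js ! 1 = Some k" using permute_list_nth[OF isp'] ls0 n2 ip L(3,4)
    by (simp add: js_def js0_def)
  moreover obtain a b rest where abr: "js = a # b # rest" using lsj n2
    by (metis Suc_le_length_iff numeral_2_eq_2)
  ultimately have jsd: "js = Some j # Some k # rest" by simp
  have lr: "length rest = n - 2" using lsj jsd by simp
  have Bne: "brk scl n P s (map (uset e V) js) \<noteq> {0}" using Beq PLB L(8) by auto
  have j0: "js ! 0 \<noteq> None" using jsd by simp
  from qm_brk[OF lsj j0 sperm] show ?thesis
  proof
    assume "\<exists>r. brk scl n P s (map (uset e V) js) \<subseteq> line scl (e r)"
    then obtain r where "brk scl n P s (map (uset e V) js) \<subseteq> line scl (e r)" by blast
    from amap_some[OF Bne this] have am: "amap scl n P V e s (Some j # Some k # rest) = {Some r}"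
      using jsd by simp
    have "Some r \<in> mu scl n P V e (map_bsym Some (Pl j)) (PlT (Some k # rest))"
      unfolding bsym.map mu_PlPl using sperm am by blast
    then have 1: "stp j r" unfolding stp_def using lr n2
      by (intro exI[of _ "PlT (Some k # rest)"] exI[of _ "Pl j"]) (auto simp: btup_len_def)
    have tp: "Transposition.transpose 0 1 \<circ> s permutes {0..<n}"
      using n2 sperm by (intro permutes_compose permutes_swap_id) auto
    have "amap scl n P V e (Transposition.transpose 0 1 \<circ> s) (Some k # Some j # rest) = {Some r}"
      using amap_swap[OF lr sperm, of "Some k" "Some j"] am by simp
    then have "Some k \<in> bmap scl n P V e (Transposition.transpose 0 1 \<circ> s) (Some r) (Some j # rest)"
      by (simp add: bmap_def)
    then have "Some k \<in> mu scl n P V e (map_bsym Some (Pl r)) (BrT (Some j # rest))"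
      unfolding bsym.map mu_PlBr using tp by blast
    then have 2: "stp r k" unfolding stp_def using lr n2
      by (intro exI[of _ "BrT (Some j # rest)"] exI[of _ "Pl r"]) (auto simp: btup_len_def)
    show ?thesis using 1 2 by simp
  next
    assume "brk scl n P s (map (uset e V) js) \<subseteq> V"
    from amap_none[OF Bne this] have am: "amap scl n P V e s (Some j # Some k # rest) = {None}"
      using jsd by simp
    then have bm: "Some j \<in> bmap scl n P V e s ((None # rest) ! 0) (Some k # take 0 (None # rest) @ drop (Suc 0) (None # rest))"
      by (simp add: bmap_def)
    have m0: "(0::nat) \<in> {0..<n - 1}" using n2 by simp
    have "Some j \<in> mu scl n P V e (map_bsym Some (Br k)) (PlT (None # rest))"
      unfolding bsym.map mu_BrPl
      by (rule UN_I[OF m0], rule UN_I[of s], simp add: sperm, rule bm)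
    then have "stp k j" unfolding stp_def using lr n2
      by (intro exI[of _ "PlT (None # rest)"] exI[of _ "Br k"]) (auto simp: btup_len_def)
    then show ?thesis using stp_rt_sym by blast
  qed
qed


lemma span_VW: "v \<in> vs.span (V \<union> range e)"
proof -
  obtain a b where ab: "v = a + b" "a \<in> V" "b \<in> W" using q_sum by blast
  have "a \<in> vs.span (V \<union> range e)" using ab(2) by (intro vs.span_base) simp
  moreover have "b \<in> vs.span (V \<union> range e)"
    using ab(3) q_spanW vs.span_mono[of "range e" "V \<union> range e"] by auto
  ultimately show ?thesis using ab(1) vs.span_add by simp
qed

lemma span_hom: "v \<in> vs.span (\<Union>g. Lg g)"
proof -
  have "graded_space scl Lg" using gLt by (simp add: colour_gLt_algebra_def graded_nary_algebra_def)
  then obtain c where c: "finite {g. c g \<noteq> 0}" "\<forall>g. c g \<in> Lg g" "v = (\<Sum>g\<in>{g. c g \<noteq> 0}. c g)"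
    unfolding graded_space_def by blast
  show ?thesis unfolding c(3) by (rule vs.span_sum, rule vs.span_base) (use c(2) in blast)
qed

lemma graded: "length xs = n \<Longrightarrow> length gs = n \<Longrightarrow> \<forall>r<n. xs ! r \<in> Lg (gs ! r) \<Longrightarrow> P xs \<in> Lg (sum_list gs)"
  using gLt by (simp add: colour_gLt_algebra_def graded_nary_algebra_def)

lemma hom_some: "homogeneous Lg x \<Longrightarrow> x \<in> Lg (SOME g. x \<in> Lg g)"
  unfolding homogeneous_def by (rule someI_ex)

lemma hom_prod: assumes "length ixs = n" shows "homogeneous Lg (P (map e ixs))"
proof -
  let ?gs = "map (\<lambda>x. SOME g. x \<in> Lg g) (map e ixs)"
  have "P (map e ixs) \<in> Lg (sum_list ?gs)"
    using assms by (intro graded) (auto intro: hom_some q_hom)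
  then show ?thesis unfolding homogeneous_def by blast
qed

definition Gen :: "'i set \<Rightarrow> 'v set" where
  "Gen C = e ` C \<union> {P (map e ixs) | ixs. length ixs = n \<and> set ixs \<subseteq> C \<and> P (map e ixs) \<in> V}"

lemma Gen_hom: "x \<in> Gen C \<Longrightarrow> homogeneous Lg x"
  unfolding Gen_def using q_hom hom_prod by blast

lemma E1:
  assumes nc: "\<not> stp\<^sup>*\<^sup>* j k" and L: "length L = n" "p < n" "q < n" "p \<noteq> q" "L ! p = e j" "L ! q = e k"
  shows "P L = 0"
proof -
  let ?G = "\<lambda>r. if r = p then {e j} else if r = q then {e k} else V \<union> range e"
  have H: "P xs = 0" if "length xs = n" "\<forall>r<n. xs ! r \<in> ?G r" for xs
  proof (rule ccontr)
    assume "P xs \<noteq> 0"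
    moreover have "xs ! p = e j" "xs ! q = e k" using that L by (auto dest: spec[of _ p] spec[of _ q])
    moreover have "\<forall>r<n. xs ! r \<in> V \<union> range e" using that by (auto split: if_splits)
    ultimately have "stp\<^sup>*\<^sup>* j k" using E1core[of xs p q j k] that L by blast
    then show False using nc by simp
  qed
  have "\<forall>r<n. L ! r \<in> vs.span (?G r)"
    using L span_VW by (auto intro: vs.span_base)
  then show ?thesis using ext_span[of ?G L] H L(1) by blast
qed

lemma reduce:
  assumes Q: "\<And>M t u. length M = n \<Longrightarrow> t < n \<Longrightarrow> u < n \<Longrightarrow> t \<noteq> u \<Longrightarrow> M ! t \<in> e ` C \<Longrightarrow> M ! u = y \<Longrightarrow> P M = 0"
    and A: "set ixs \<subseteq> C" "length ixs = n" "length L = n" "p < n" "q < n" "p \<noteq> q"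
      "L ! p = P (map e ixs)" "L ! q = y" "\<forall>r<n. r \<noteq> p \<longrightarrow> homogeneous Lg (L ! r)"
  shows "P L = 0"
proof -
  define xs where "xs = map e ixs"
  define ys where "ys = take p L @ drop (Suc p) L"
  define gs where "gs = map (\<lambda>x. SOME g. x \<in> Lg g) xs"
  define hs where "hs = map (\<lambda>x. SOME g. x \<in> Lg g) ys"
  have lx: "length xs = n" "length gs = n" using A(2) by (simp_all add: xs_def gs_def)
  have ly: "length ys = n - 1" "length hs = n - 1" using A(3,4) by (simp_all add: ys_def hs_def)
  have ysn: "ys ! r = L ! (if r < p then r else Suc r)" if "r < n - 1" for r
    using that A(3,4) by (auto simp: ys_def nth_append min_def)
  have hx: "\<forall>r<n. xs ! r \<in> Lg (gs ! r)" using lx by (auto simp: gs_def xs_def intro: hom_some q_hom)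
  have hy: "\<forall>r<n - 1. ys ! r \<in> Lg (hs ! r)"
  proof (intro allI impI)
    fix r assume r: "r < n - 1"
    have "homogeneous Lg (ys ! r)" using ysn[OF r] A(9) r by auto
    then show "ys ! r \<in> Lg (hs ! r)" using r ly by (simp add: hs_def hom_some)
  qed
  have ID: "lhs_term P p xs ys =
          (\<Sum>(i, j, s1, s2) \<in> {0..<n} \<times> {0..<n} \<times> {s. s permutes {0..<n}} \<times> {s. s permutes {0..<n - 1}}.
             scl (alpha i j p s1 s2 *
                  colour_factor eps (tag_degree gs hs) (lhs_order n p) (rhs_order n i j s1 s2))
                 (rhs_term P n i j s1 s2 xs ys))"
    using gLt A(4) lx ly hx hy unfolding colour_gLt_algebra_def by blast
  have lhs: "lhs_term P p xs ys = P L"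
  proof -
    have "take p ys = take p L" using A(3,4) by (simp add: ys_def)
    moreover have "drop p ys = drop (Suc p) L" using A(3,4) by (simp add: ys_def)
    ultimately have "lhs_term P p xs ys = P (take p L @ [L ! p] @ drop (Suc p) L)"
      using A(7) by (simp add: lhs_term_def xs_def)
    also have "take p L @ [L ! p] @ drop (Suc p) L = L" using id_take_nth_drop[of p L] A(3,4) by simp
    finally show ?thesis .
  qed
  define q' where "q' = (if q < p then q else q - 1)"
  have q'n: "q' < n - 1" using A(4,5,6) by (auto simp: q'_def)
  have ysq: "ys ! q' = y" using ysn[OF q'n] A(6,8) by (auto simp: q'_def)
  have rhs0: "rhs_term P n i j s1 s2 xs ys = 0"
    if ij: "i < n" "j < n" and s1: "s1 permutes {0..<n}" and s2: "s2 permutes {0..<n - 1}" for i j s1 s2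
  proof -
    define M where "M = map (\<lambda>r. ys ! s2 r) [0..<j] @ [xs ! s1 i] @ map (\<lambda>r. ys ! s2 r) [j..<n - 1]"
    have lM: "length M = n" using ij by (simp add: M_def)
    have Mj: "M ! j = xs ! s1 i" by (simp add: M_def nth_append)
    have s1i: "s1 i < n" using perm_lt[OF s1 ij(1)] .
    have "ixs ! s1 i \<in> C" using s1i A(1,2) nth_mem by blast
    then have MjC: "M ! j \<in> e ` C" using Mj s1i A(2) by (simp add: xs_def)
    define r0 where "r0 = inv s2 q'"
    have r0: "r0 < n - 1" "s2 r0 = q'"
      using permutes_in_image[OF permutes_inv[OF s2]] q'n permutes_inverses(1)[OF s2] by (auto simp: r0_def)
    have "P M = 0"
    proof (cases "r0 < j")
      case True
      have "M ! r0 = ys ! s2 r0" using True by (simp add: M_def nth_append)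
      then have a: "M ! r0 = y" using r0 ysq by simp
      have b: "r0 < n" "j \<noteq> r0" using True ij by auto
      show ?thesis by (rule Q[OF lM ij(2) b(1) b(2) MjC a])
    next
      case False
      have "M ! Suc r0 = (map (\<lambda>r. ys ! s2 r) [j..<n - 1]) ! (r0 - j)"
        using False by (simp add: M_def nth_append)
      also have "\<dots> = ys ! s2 ([j..<n - 1] ! (r0 - j))" by (rule nth_map) (use False r0(1) in simp)
      also have "[j..<n - 1] ! (r0 - j) = r0" using False r0(1) by (subst nth_upt) auto
      finally have "M ! Suc r0 = ys ! s2 r0" .
      then have a: "M ! Suc r0 = y" using r0 ysq by simp
      have b: "Suc r0 < n" "j \<noteq> Suc r0" using False r0(1) n2 by auto
      show ?thesis by (rule Q[OF lM ij(2) b(1) b(2) MjC a])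
    qed
    then have "rhs_term P n i j s1 s2 xs ys =
       P (map (\<lambda>r. xs ! s1 r) [0..<i] @ [0] @ map (\<lambda>r. xs ! s1 r) [Suc i..<n])"
      by (simp add: rhs_term_def M_def)
    also have "\<dots> = 0" using ij(1) by (intro P_zero_arg[of _ i]) (auto simp: nth_append)
    finally show ?thesis .
  qed
  have "(\<Sum>(i, j, s1, s2) \<in> {0..<n} \<times> {0..<n} \<times> {s. s permutes {0..<n}} \<times> {s. s permutes {0..<n - 1}}.
             scl (alpha i j p s1 s2 *
                  colour_factor eps (tag_degree gs hs) (lhs_order n p) (rhs_order n i j s1 s2))
                 (rhs_term P n i j s1 s2 xs ys)) = 0"
    by (rule sum.neutral) (auto simp: rhs0)
  then show ?thesis using ID lhs by simp
qed


lemma E2: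
  assumes sep: "\<And>a b. a \<in> Ca \<Longrightarrow> b \<in> Cb \<Longrightarrow> \<not> stp\<^sup>*\<^sup>* a b"
    and L: "length L = n" "p < n" "q < n" "p \<noteq> q" "L ! p = e j" "j \<in> Ca" "L ! q \<in> Gen Cb"
  shows "P L = 0"
proof -
  from L(7) consider (b) k where "k \<in> Cb" "L ! q = e k"
    | (p) ixs where "length ixs = n" "set ixs \<subseteq> Cb" "L ! q = P (map e ixs)"
    unfolding Gen_def by blast
  then show ?thesis
  proof cases
    case b
    show ?thesis by (rule E1[OF sep[OF L(6) b(1)] L(1-5) b(2)])
  next
    case p
    let ?x = "L ! q"
    let ?G = "\<lambda>r. if r = p then {e j} else if r = q then {?x} else (\<Union>g. Lg g)"
    have H: "P xs = 0" if xs: "length xs = n" "\<forall>r<n. xs ! r \<in> ?G r" for xs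
    proof -
      have xp: "xs ! p = e j" "xs ! q = ?x" using xs L by (auto dest: spec[of _ p] spec[of _ q])
      have Q: "P M = 0" if MM: "length M = n" "t < n" "u < n" "t \<noteq> u" "M ! t \<in> e ` Cb" "M ! u = e j" for M t u
      proof -
        obtain m where m: "m \<in> Cb" "M ! t = e m" using MM(5) by blast
        have "\<not> stp\<^sup>*\<^sup>* m j" using sep[OF L(6) m(1)] stp_rt_sym by blast
        from E1[OF this MM(1-4) m(2) MM(6)] show ?thesis .
      qed
      have hom: "\<forall>r<n. r \<noteq> q \<longrightarrow> homogeneous Lg (xs ! r)"
      proof (intro allI impI)
        fix r assume r: "r < n" "r \<noteq> q"
        show "homogeneous Lg (xs ! r)"
        proof (cases "r = p")
          case True then show ?thesis using xp q_hom by simp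
        next
          case False then show ?thesis using xs(2) r unfolding homogeneous_def by auto
        qed
      qed
      show ?thesis
        by (rule reduce[OF Q p(2) p(1) xs(1) L(3) L(2) L(4)[symmetric]]) (use xp p(3) hom in auto)
    qed
    have "\<forall>r<n. L ! r \<in> vs.span (?G r)"
      using L span_hom by (auto intro: vs.span_base)
    then show ?thesis using ext_span[of ?G L] H L(1) by blast
  qed
qed

lemma E3:
  assumes sep: "\<And>a b. a \<in> Ca \<Longrightarrow> b \<in> Cb \<Longrightarrow> \<not> stp\<^sup>*\<^sup>* a b"
    and L: "length L = n" "p < n" "q < n" "p \<noteq> q" "L ! p \<in> Gen Ca" "L ! q \<in> Gen Cb"
  shows "P L = 0"
proof -
  from L(5) consider (b) j where "j \<in> Ca" "L ! p = e j"
    | (p) ixs where "length ixs = n" "set ixs \<subseteq> Ca" "L ! p = P (map e ixs)"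
    unfolding Gen_def by blast
  then show ?thesis
  proof cases
    case b
    show ?thesis by (rule E2[OF sep L(1-4) b(2) b(1) L(6)])
  next
    case p
    let ?x = "L ! p" and ?y = "L ! q"
    let ?G = "\<lambda>r. if r = p then {?x} else if r = q then {?y} else (\<Union>g. Lg g)"
    have H: "P xs = 0" if xs: "length xs = n" "\<forall>r<n. xs ! r \<in> ?G r" for xs
    proof -
      have xp: "xs ! p = ?x" "xs ! q = ?y" using xs L by (auto dest: spec[of _ p] spec[of _ q])
      have Q: "P M = 0" if MM: "length M = n" "t < n" "u < n" "t \<noteq> u" "M ! t \<in> e ` Ca" "M ! u = ?y" for M t u
      proof -
        obtain m where m: "m \<in> Ca" "M ! t = e m" using MM(5) by blast
        have yq: "M ! u \<in> Gen Cb" using MM(6) L(6) by simp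
        show ?thesis by (rule E2[OF sep MM(1-4) m(2) m(1) yq])
      qed
      have hom: "\<forall>r<n. r \<noteq> p \<longrightarrow> homogeneous Lg (xs ! r)"
      proof (intro allI impI)
        fix r assume r: "r < n" "r \<noteq> p"
        show "homogeneous Lg (xs ! r)"
        proof (cases "r = q")
          case True then show ?thesis using xp Gen_hom[OF L(6)] by simp
        next
          case False then show ?thesis using xs(2) r unfolding homogeneous_def by auto
        qed
      qed
      show ?thesis
        by (rule reduce[OF Q p(2) p(1) xs(1) L(2) L(3) L(4)]) (use xp p(3) hom in auto)
    qed
    have "\<forall>r<n. L ! r \<in> vs.span (?G r)"
      using L span_hom by (auto intro: vs.span_base)
    then show ?thesis using ext_span[of ?G L] H L(1) by blast
  qed
qed

lemma prod_in:
  assumes "length ixs = n" "set ixs \<subseteq> cls scl n P V e i"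
  shows "P (map e ixs) \<in> vs.span (Gen (cls scl n P V e i))"
proof -
  have lq: "length ixs = n" by fact
  from q_1[OF lq] show ?thesis
  proof
    assume "P (map e ixs) \<in> V"
    then have "P (map e ixs) \<in> Gen (cls scl n P V e i)" using assms unfolding Gen_def by blast
    then show ?thesis by (rule vs.span_base)
  next
    assume "\<exists>r. P (map e ixs) \<in> line scl (e r)"
    then obtain r where r: "P (map e ixs) \<in> line scl (e r)" by blast
    show ?thesis
    proof (cases "P (map e ixs) = 0")
      case True then show ?thesis by (simp add: vs.span_zero)
    next
      case False
      have idp: "id permutes {0..<n}" by (rule permutes_id)
      have me: "map (\<lambda>r. e (ixs ! id r)) [0..<n] = map e ixs"
        by (rule nth_equalityI) (simp_all add: assms(1))
      have "brk scl n P id (map (uset e V) (map Some ixs)) \<subseteq> vs.span {P (map e ixs)}"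
        using brk_single[OF assms(1) idp] unfolding me .
      also have "\<dots> \<subseteq> line scl (e r)" using r unfolding line_span
        by (intro vs.span_minimal) (auto simp: vs.subspace_span)
      finally have Bl: "brk scl n P id (map (uset e V) (map Some ixs)) \<subseteq> line scl (e r)" .
      have "P (map e ixs) \<in> brk scl n P id (map (uset e V) (map Some ixs))"
        unfolding brk_def
      proof (rule vs.span_base)
        have "P (map (\<lambda>r. (map e ixs) ! id r) [0..<n]) = P (map e ixs)"
          using assms(1) map_nth[of "map e ixs"] by simp
        moreover have "\<forall>r<n. map e ixs ! r \<in> map (uset e V) (map Some ixs) ! r"
          using assms(1) by (simp add: uset_def)
        ultimately show "P (map e ixs) \<in> {P (map (\<lambda>r. xs ! id r) [0..<n]) | xs. length xs = n \<and> (\<forall>r<n. xs ! r \<in> map (uset e V) (map Some ixs) ! r)}"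
          using assms(1) by force
      qed
      then have Bne: "brk scl n P id (map (uset e V) (map Some ixs)) \<noteq> {0}" using False by auto
      have am: "amap scl n P V e id (map Some ixs) = {Some r}" by (rule amap_some[OF Bne Bl])
      obtain a rest where ar: "ixs = a # rest" using assms(1) n2 by (cases ixs) auto
      have "Some r \<in> mu scl n P V e (map_bsym Some (Pl a)) (PlT (map Some rest))"
        unfolding bsym.map mu_PlPl by (rule UN_I[of id]) (use idp am ar in simp_all)
      then have "stp a r" unfolding stp_def using assms(1) ar
        by (intro exI[of _ "PlT (map Some rest)"] exI[of _ "Pl a"]) (auto simp: btup_len_def)
      moreover have "stp\<^sup>*\<^sup>* i a" using assms(2) ar by (auto simp: cls_eq)
      ultimately have "r \<in> cls scl n P V e i" by (simp add: cls_eq)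
      then have "e r \<in> Gen (cls scl n P V e i)" unfolding Gen_def by blast
      then have "line scl (e r) \<subseteq> vs.span (Gen (cls scl n P V e i))"
        unfolding line_span by (intro vs.span_mono) auto
      then show ?thesis using r by blast
    qed
  qed
qed

lemma J_sub: "Jcls scl n P V e i \<subseteq> vs.span (Gen (cls scl n P V e i))"
proof -
  let ?C = "cls scl n P V e i"
  have "{P (map e ixs) | ixs. length ixs = n \<and> set ixs \<subseteq> ?C} \<subseteq> vs.span (Gen ?C)"
    using prod_in by blast
  then have 1: "vs.span {P (map e ixs) | ixs. length ixs = n \<and> set ixs \<subseteq> ?C} \<subseteq> vs.span (Gen ?C)"
    by (rule vs.span_minimal[OF _ vs.subspace_span])
  have 2: "vs.span (e ` ?C) \<subseteq> vs.span (Gen ?C)" by (rule vs.span_mono) (auto simp: Gen_def)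
  show ?thesis unfolding Jcls_def Let_def using 1 2 vs.span_add by blast
qed

lemma main:
  assumes "cls scl n P V e i \<noteq> cls scl n P V e h" "s permutes {0..<n}"
  shows "brk scl n P s (Jcls scl n P V e i # Jcls scl n P V e h # replicate (n - 2) UNIV) = {0}"
proof -
  let ?As = "Jcls scl n P V e i # Jcls scl n P V e h # replicate (n - 2) UNIV"
  let ?Ci = "cls scl n P V e i" and ?Ch = "cls scl n P V e h"
  have sep: "\<not> stp\<^sup>*\<^sup>* a b" if "a \<in> ?Ci" "b \<in> ?Ch" for a b using cls_sep[OF assms(1) that] .
  have gen0: "z = 0" if zz: "z \<in> {P (map (\<lambda>r. xs ! s r) [0..<n]) | xs. length xs = n \<and> (\<forall>r<n. xs ! r \<in> ?As ! r)}" for z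
  proof -
    obtain xs where x: "z = P (map (\<lambda>r. xs ! s r) [0..<n])" "length xs = n" "\<forall>r<n. xs ! r \<in> ?As ! r"
      using zz by blast
    define L where "L = map (\<lambda>r. xs ! s r) [0..<n]"
    define p where "p = inv s 0"
    define q where "q = inv s 1"
    have pq: "s p = 0" "s q = 1" using permutes_inverses(1)[OF assms(2)] by (simp_all add: p_def q_def)
    have pn: "p < n" "q < n" using permutes_in_image[OF permutes_inv[OF assms(2)]] n2 by (auto simp: p_def q_def)
    have pnq: "p \<noteq> q" using pq by auto
    have lL: "length L = n" by (simp add: L_def)
    have "L ! p = xs ! 0" using pn pq by (simp add: L_def)
    moreover have "xs ! 0 \<in> Jcls scl n P V e i" using x(3)[rule_format, of 0] n2 by simp
    ultimately have Lp: "L ! p \<in> vs.span (Gen ?Ci)" using J_sub by auto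
    have "L ! q = xs ! 1" using pn pq by (simp add: L_def)
    moreover have "xs ! 1 \<in> Jcls scl n P V e h" using x(3)[rule_format, of 1] n2 by simp
    ultimately have Lq: "L ! q \<in> vs.span (Gen ?Ch)" using J_sub by auto
    let ?G = "\<lambda>r. if r = p then Gen ?Ci else if r = q then Gen ?Ch else UNIV"
    have H: "P ys = 0" if "length ys = n" "\<forall>r<n. ys ! r \<in> ?G r" for ys
    proof -
      have "ys ! p \<in> Gen ?Ci" using that(2)[rule_format, of p] pn by simp
      moreover have "ys ! q \<in> Gen ?Ch" using that(2)[rule_format, of q] pn pnq by simp
      ultimately show ?thesis using E3[of ?Ci ?Ch, OF sep that(1) pn pnq] by blast
    qed
    have "\<forall>r<n. L ! r \<in> vs.span (?G r)" using Lp Lq by auto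
    then have "P L = 0" using ext_span[of ?G L] H lL by blast
    then show ?thesis using x(1) by (simp add: L_def)
  qed
  have "brk scl n P s ?As \<subseteq> {0}"
    unfolding brk_def by (rule vs.span_minimal) (use gen0 in auto)
  moreover have "0 \<in> brk scl n P s ?As" unfolding brk_def by (rule vs.span_zero)
  ultimately show ?thesis by blast
qed

end

theorem lemma3p11:
  fixes scl :: "'k::field \<Rightarrow> 'v::ab_group_add \<Rightarrow> 'v"
    and Lg :: "'g::ab_group_add \<Rightarrow> 'v set"
    and eps :: "'g \<Rightarrow> 'g \<Rightarrow> 'k"
    and n :: nat
    and P :: "'v list \<Rightarrow> 'v"
    and alpha :: "nat \<Rightarrow> nat \<Rightarrow> nat \<Rightarrow> (nat \<Rightarrow> nat) \<Rightarrow> (nat \<Rightarrow> nat) \<Rightarrow> 'k"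
    and V W :: "'v set"
    and e :: "'i \<Rightarrow> 'v"
    and i h :: 'i
  assumes "colour_gLt_algebra scl Lg eps n P alpha"
    and "quasi_mult_basis scl Lg n P V W e"
    and "cls scl n P V e i \<noteq> cls scl n P V e h"
  shows "\<forall>s. s permutes {0..<n} \<longrightarrow>
           brk scl n P s (Jcls scl n P V e i # Jcls scl n P V e h # replicate (n - 2) UNIV) = {0}"
proof -
  interpret QM scl Lg eps n P alpha V W e using assms(1,2) by unfold_locales
  show ?thesis using main[OF assms(3)] by blast
qed

end
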